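(* Let $n \ge 4$ be an even integer, let $m = \frac{n-2}{2}$, and let $G_n$ be the $n$-vertex graph obtained from two disjoint cliques $Q_1, Q_2$, each isomorphic to $K_m$, together with two non-adjacent vertices $u$ and $v$, each adjacent to every vertex of $Q_1 \cup Q_2$ (i.e., $G_n$ is the join of $2K_m$ with $2K_1$). Then $AT(G_n) = \frac{n}{2}$.
   Context: For a digraph $D$, an Eulerian subdigraph is a spanning subdigraph $F$ with $d^+_F(v) = d^-_F(v)$ for every vertex $v$; it is even or odd according to the parity of its number of edges. The Alon--Tarsi number $AT(G)$ is the minimum $k$ such that there is an orientation $D$ of $G$ in which every vertex has outdegree less than $k$ and the number of even Eulerian subdigraphs of $D$ differs from the number of odd Eulerian subdigraphs. *)

theory Defs
  imports Main
begin

text \<open>A simple graph is given by a vertex set V and a set E of 2-element edges {x,y}.\<close>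

definition is_orientation :: "'a set set \<Rightarrow> ('a \<times> 'a) set \<Rightarrow> bool" where
  "is_orientation E D \<longleftrightarrow>
     (\<forall>(x,y)\<in>D. x \<noteq> y \<and> {x,y} \<in> E) \<and>
     (\<forall>e\<in>E. \<exists>!p. p \<in> D \<and> e = {fst p, snd p})"

definition outdeg :: "('a \<times> 'a) set \<Rightarrow> 'a \<Rightarrow> nat" where
  "outdeg D x = card {y. (x,y) \<in> D}"

definition indeg :: "('a \<times> 'a) set \<Rightarrow> 'a \<Rightarrow> nat" where
  "indeg D x = card {y. (y,x) \<in> D}"

definition eulerian_sub :: "('a \<times> 'a) set \<Rightarrow> ('a \<times> 'a) set \<Rightarrow> bool" where
  "eulerian_sub D F \<longleftrightarrow> F \<subseteq> D \<and> (\<forall>x. outdeg F x = indeg F x)"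

definition EE :: "('a \<times> 'a) set \<Rightarrow> nat" where
  "EE D = card {F. eulerian_sub D F \<and> even (card F)}"

definition EO :: "('a \<times> 'a) set \<Rightarrow> nat" where
  "EO D = card {F. eulerian_sub D F \<and> odd (card F)}"

definition AT :: "'a set \<Rightarrow> 'a set set \<Rightarrow> nat" where
  "AT V E = (LEAST k. \<exists>D. is_orientation E D \<and> (\<forall>x\<in>V. outdeg D x < k) \<and> EE D \<noteq> EO D)"

text \<open>The graph G_n on vertices {0..<n}, with m = (n-2)/2:
Q1 = {0..<m}, Q2 = {m..<2m} cliques, u = 2m, v = 2m+1 non-adjacent,
each adjacent to all of Q1 \<union> Q2.\<close>

definition Gn_vertices :: "nat \<Rightarrow> nat set" where
  "Gn_vertices n = {0..<n}"

definition Gn_edges :: "nat \<Rightarrow> nat set set" where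
  "Gn_edges n = (let m = (n - 2) div 2 in
     {{x,y} | x y. x \<noteq> y \<and>
        ((x < m \<and> y < m) \<or>
         (m \<le> x \<and> x < 2*m \<and> m \<le> y \<and> y < 2*m) \<or>
         (x < 2*m \<and> (y = 2*m \<or> y = 2*m+1)))})"

end

theory Submission
  imports Defs "HOL-Library.FuncSet" "HOL-Computational_Algebra.Polynomial"
begin


definition phi :: "real set \<Rightarrow> real \<Rightarrow> real" where
  "phi S s = (\<Prod>t\<in>S-{s}. s - t)"

lemma phi_nz: "finite S \<Longrightarrow> phi S s \<noteq> 0"
  unfolding phi_def by (auto)

lemma lagr:
  fixes S :: "real set"
  assumes fin: "finite S" and cS: "card S = N" and N: "N \<ge> 1" and e: "e \<le> N - 1"
  shows "(\<Sum>s\<in>S. s ^ e / phi S s) = (if e = N - 1 then 1 else 0)"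
proof -
  define L where "L s = (\<Prod>t\<in>S-{s}. [:-t, 1:])" for s
  define p where "p = (\<Sum>s\<in>S. smult (s ^ e / phi S s) (L s))"
  have degL: "degree (L s) = N - 1" if "s \<in> S" for s
  proof -
    have "degree (L s) = (\<Sum>t\<in>S-{s}. degree [:-t, 1::real:])"
      unfolding L_def by (rule degree_prod_eq_sum_degree) auto
    also have "\<dots> = card (S - {s})" by simp
    finally show ?thesis using that fin cS by simp
  qed
  have lcL: "lead_coeff (L s) = 1" for s
    unfolding L_def lead_coeff_prod by simp
  have polyL: "poly (L s) r = (\<Prod>t\<in>S-{s}. r - t)" for s r
    unfolding L_def poly_prod by simp
  have polyp: "poly p r = r ^ e" if r: "r \<in> S" for r
  proof -
    have "poly p r = (\<Sum>s\<in>S. s ^ e / phi S s * poly (L s) r)"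
      unfolding p_def poly_sum by simp
    also have "\<dots> = (\<Sum>s\<in>{r}. s ^ e / phi S s * poly (L s) r)"
    proof (rule sum.mono_neutral_right)
      show "\<forall>i\<in>S - {r}. i ^ e / phi S i * poly (L i) r = 0"
      proof
        fix i assume i: "i \<in> S - {r}"
        have "poly (L i) r = 0" unfolding polyL
          using fin r i by (intro prod_zero) auto
        then show "i ^ e / phi S i * poly (L i) r = 0" by simp
      qed
    qed (use fin r in auto)
    also have "\<dots> = r ^ e" using phi_nz[OF fin, of r] by (simp add: polyL phi_def)
    finally show ?thesis .
  qed
  have degp: "degree p \<le> N - 1"
    unfolding p_def
    by (rule degree_sum_le) (use fin degL in \<open>auto intro: order.trans[OF degree_smult_le]\<close>)
  have "p = monom 1 e"
  proof (rule ccontr)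
    assume ne: "p \<noteq> monom 1 e"
    let ?q = "p - monom 1 e"
    have q0: "?q \<noteq> 0" using ne by simp
    have "degree ?q \<le> N - 1"
      using degp degree_monom_le[of 1 e] e by (intro degree_diff_le) (auto intro: order.trans)
    moreover have "S \<subseteq> {x. poly ?q x = 0}" using polyp by (auto simp: poly_monom)
    then have "N \<le> card {x. poly ?q x = 0}"
      using cS card_mono[OF poly_roots_finite[OF q0]] by blast
    ultimately show False using card_poly_roots_bound[OF q0] N by linarith
  qed
  moreover have "coeff p (N - 1) = (\<Sum>s\<in>S. s ^ e / phi S s)"
  proof -
    have "coeff (L s) (N - 1) = 1" if "s \<in> S" for s using lcL[of s] degL[OF that] by simp
    then show ?thesis unfolding p_def coeff_sum by simp
  qed
  ultimately show ?thesis by simp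
qed


lemma fin_out: "finite F \<Longrightarrow> finite {y. (x,y) \<in> F}"
  by (rule finite_subset[of _ "snd ` F"]) force+
lemma fin_in: "finite F \<Longrightarrow> finite {y. (y,x) \<in> F}"
  by (rule finite_subset[of _ "fst ` F"]) force+

lemma out_insert: "finite F \<Longrightarrow> p \<notin> F \<Longrightarrow>
   outdeg (insert p F) x = outdeg F x + (if x = fst p then 1 else 0)"
proof -
  assume f: "finite F" and p: "p \<notin> F"
  show ?thesis
  proof (cases "x = fst p")
    case True
    then have "{y. (x,y) \<in> insert p F} = insert (snd p) {y. (x,y) \<in> F}" by (cases p) auto
    moreover have "snd p \<notin> {y. (x,y) \<in> F}" using p True by (cases p) auto
    ultimately show ?thesis using True fin_out[OF f] by (simp add: outdeg_def)
  next
    case False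
    then have "{y. (x,y) \<in> insert p F} = {y. (x,y) \<in> F}" by (cases p) auto
    then show ?thesis using False by (simp add: outdeg_def)
  qed
qed

lemma in_insert: "finite F \<Longrightarrow> p \<notin> F \<Longrightarrow>
   indeg (insert p F) x = indeg F x + (if x = snd p then 1 else 0)"
proof -
  assume f: "finite F" and p: "p \<notin> F"
  show ?thesis
  proof (cases "x = snd p")
    case True
    then have "{y. (y,x) \<in> insert p F} = insert (fst p) {y. (y,x) \<in> F}" by (cases p) auto
    moreover have "fst p \<notin> {y. (y,x) \<in> F}" using p True by (cases p) auto
    ultimately show ?thesis using True fin_in[OF f] by (simp add: indeg_def)
  next
    case False
    then have "{y. (y,x) \<in> insert p F} = {y. (y,x) \<in> F}" by (cases p) auto
    then show ?thesis using False by (simp add: indeg_def)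
  qed
qed

lemma out_empty[simp]: "outdeg {} x = 0" by (simp add: outdeg_def)
lemma in_empty[simp]: "indeg {} x = 0" by (simp add: indeg_def)

lemma sum_delta_add: "finite V \<Longrightarrow> a \<in> V \<Longrightarrow>
  (\<Sum>x\<in>V. f x + (if x = a then 1 else 0)) = (\<Sum>x\<in>V. f x) + (1::nat)"
  by (simp add: sum.distrib)

lemma handshake_out: "finite F \<Longrightarrow> finite V \<Longrightarrow> F \<subseteq> V \<times> V \<Longrightarrow> (\<Sum>x\<in>V. outdeg F x) = card F"
proof (induction F rule: finite_induct)
  case (insert p F)
  then show ?case by (simp add: out_insert sum.distrib mem_Times_iff)
qed simp

lemma handshake_in: "finite F \<Longrightarrow> finite V \<Longrightarrow> F \<subseteq> V \<times> V \<Longrightarrow> (\<Sum>x\<in>V. indeg F x) = card F"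
proof (induction F rule: finite_induct)
  case (insert p F)
  then show ?case by (simp add: in_insert sum.distrib mem_Times_iff)
qed simp

lemma prod_delta_mult: "finite V \<Longrightarrow> a \<in> V \<Longrightarrow>
  (\<Prod>x\<in>V. (f x::'b::comm_monoid_mult) ^ (e x + (if x = a then 1 else 0))) = f a * (\<Prod>x\<in>V. f x ^ e x)"
proof -
  assume V: "finite V" and a: "a \<in> V"
  have "(\<Prod>x\<in>V. f x ^ (e x + (if x = a then 1 else 0))) = (\<Prod>x\<in>V. f x ^ e x * (if x = a then f x else 1))"
    by (intro prod.cong) (auto simp: power_add)
  also have "\<dots> = (\<Prod>x\<in>V. f x ^ e x) * (\<Prod>x\<in>V. if x = a then f x else 1)"
    by (rule prod.distrib)
  also have "(\<Prod>x\<in>V. if x = a then f x else 1) = f a" using V a by (simp add: prod.delta)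
  finally show ?thesis by (simp add: mult.commute)
qed

lemma mono_out: "finite B \<Longrightarrow> finite V \<Longrightarrow> B \<subseteq> V \<times> V \<Longrightarrow>
  (\<Prod>p\<in>B. (f (fst p)::'b::comm_monoid_mult)) = (\<Prod>x\<in>V. f x ^ outdeg B x)"
proof (induction B rule: finite_induct)
  case (insert p F)
  then show ?case by (simp add: out_insert prod_delta_mult mem_Times_iff)
qed simp

lemma mono_in: "finite B \<Longrightarrow> finite V \<Longrightarrow> B \<subseteq> V \<times> V \<Longrightarrow>
  (\<Prod>p\<in>B. (f (snd p)::'b::comm_monoid_mult)) = (\<Prod>x\<in>V. f x ^ indeg B x)"
proof (induction B rule: finite_induct)
  case (insert p F)
  then show ?case by (simp add: in_insert prod_delta_mult mem_Times_iff)
qed simp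

lemma out_union: "finite A \<Longrightarrow> finite B \<Longrightarrow> A \<inter> B = {} \<Longrightarrow> outdeg (A \<union> B) x = outdeg A x + outdeg B x"
proof -
  assume a: "finite A" "finite B" "A \<inter> B = {}"
  have "{y. (x,y) \<in> A \<union> B} = {y. (x,y) \<in> A} \<union> {y. (x,y) \<in> B}" by auto
  then show ?thesis unfolding outdeg_def using a fin_out[of A x] fin_out[of B x]
    by (simp add: card_Un_disjoint disjoint_iff)
qed

lemma in_union: "finite A \<Longrightarrow> finite B \<Longrightarrow> A \<inter> B = {} \<Longrightarrow> indeg (A \<union> B) x = indeg A x + indeg B x"
proof -
  assume a: "finite A" "finite B" "A \<inter> B = {}"
  have "{y. (y,x) \<in> A \<union> B} = {y. (y,x) \<in> A} \<union> {y. (y,x) \<in> B}" by auto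
  then show ?thesis unfolding indeg_def using a fin_in[of A x] fin_in[of B x]
    by (simp add: card_Un_disjoint disjoint_iff)
qed

lemma prod_neg: "(\<Prod>x\<in>A. - (f x::real)) = (-1) ^ card A * (\<Prod>x\<in>A. f x)"
  by (induction A rule: infinite_finite_induct) auto

lemma EE_EO: "finite D \<Longrightarrow> real (EE D) - real (EO D) = (\<Sum>F\<in>{F. eulerian_sub D F}. (-1::real) ^ card F)"
proof -
  assume D: "finite D"
  let ?U = "{F. eulerian_sub D F}"
  have fU: "finite ?U" by (rule finite_subset[of _ "Pow D"]) (use D in \<open>auto simp: eulerian_sub_def\<close>)
  have "(\<Sum>F\<in>?U. (-1::real) ^ card F) = (\<Sum>F\<in>{F\<in>?U. even (card F)}. (-1::real) ^ card F) + (\<Sum>F\<in>{F\<in>?U. \<not> even (card F)}. (-1::real) ^ card F)"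
    using fU by (subst sum.union_disjoint[symmetric]) (auto intro: sum.cong)
  also have "\<dots> = real (EE D) - real (EO D)"
    by (simp add: EE_def EO_def)
  finally show ?thesis by simp
qed



lemma cn:
  fixes D :: "('a \<times> 'a) set" and S :: "real set"
  assumes V: "finite V" and DV: "D \<subseteq> V \<times> V" and S: "finite S" and cS: "card S = N" and N: "N \<ge> 1"
    and deg: "\<forall>x\<in>V. outdeg D x \<le> N - 1"
    and col: "\<forall>c. (\<forall>x\<in>V. c x \<in> S) \<longrightarrow> (\<exists>p\<in>D. c (fst p) = c (snd p))"
  shows "(\<Sum>F\<in>{F. eulerian_sub D F}. (-1::real) ^ card F) = 0"
proof -
  have D: "finite D" using DV V by (meson finite_SigmaI finite_subset)
  define a where "a x = N - 1 - outdeg D x" for x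
  define e where "e B x = a x + outdeg B x + indeg (D - B) x" for B x
  define g where "g k = (\<Sum>s\<in>S. s ^ k / phi S s)" for k
  define C where "C = PiE V (\<lambda>_. S)"
  define sg where "sg B = (-1::real) ^ card (D - B)" for B
  have fB: "finite B" if "B \<in> Pow D" for B using that D by (auto intro: finite_subset)
  have fDB: "finite (D - B)" for B using D by auto
  have BV: "B \<subseteq> V \<times> V" if "B \<in> Pow D" for B using that DV by auto
  have trm: "(\<Prod>x\<in>V. 1 / phi S (c x)) * ((\<Prod>x\<in>V. c x ^ a x) * (\<Prod>p\<in>D. c (fst p) - c (snd p)))
     = (\<Sum>B\<in>Pow D. sg B * (\<Prod>x\<in>V. c x ^ e B x / phi S (c x)))" for c
  proof -
    have "(\<Prod>p\<in>D. c (fst p) - c (snd p)) = (\<Prod>p\<in>D. c (fst p) + - c (snd p))" by simp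
    also have "\<dots> = (\<Sum>B\<in>Pow D. (\<Prod>p\<in>B. c (fst p)) * (\<Prod>p\<in>D - B. - c (snd p)))"
      by (rule prod_add[OF D])
    also have "\<dots> = (\<Sum>B\<in>Pow D. sg B * (\<Prod>x\<in>V. c x ^ (outdeg B x + indeg (D - B) x)))"
    proof (rule sum.cong)
      fix B assume B: "B \<in> Pow D"
      have "(\<Prod>p\<in>B. c (fst p)) = (\<Prod>x\<in>V. c x ^ outdeg B x)" by (rule mono_out[OF fB[OF B] V BV[OF B]])
      moreover have "(\<Prod>p\<in>D - B. c (snd p)) = (\<Prod>x\<in>V. c x ^ indeg (D - B) x)"
        by (rule mono_in[OF fDB V]) (use DV in auto)
      ultimately show "(\<Prod>p\<in>B. c (fst p)) * (\<Prod>p\<in>D - B. - c (snd p)) = sg B * (\<Prod>x\<in>V. c x ^ (outdeg B x + indeg (D - B) x))"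
        by (simp add: prod_neg sg_def power_add prod.distrib)
    qed simp
    finally have 1: "(\<Prod>p\<in>D. c (fst p) - c (snd p)) = (\<Sum>B\<in>Pow D. sg B * (\<Prod>x\<in>V. c x ^ (outdeg B x + indeg (D - B) x)))" .
    have 2: "(\<Prod>x\<in>V. 1 / phi S (c x)) * ((\<Prod>x\<in>V. c x ^ a x) * (\<Prod>x\<in>V. c x ^ (outdeg B x + indeg (D - B) x)))
       = (\<Prod>x\<in>V. c x ^ e B x / phi S (c x))" for B
      by (simp add: e_def prod.distrib[symmetric] power_add add.assoc)
    show ?thesis unfolding 1 sum_distrib_left
      by (rule sum.cong) (simp_all add: 2[symmetric] algebra_simps)
  qed
  have zero: "(\<Prod>x\<in>V. 1 / phi S (c x)) * ((\<Prod>x\<in>V. c x ^ a x) * (\<Prod>p\<in>D. c (fst p) - c (snd p))) = 0"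
    if "c \<in> C" for c
  proof -
    from that have "\<forall>x\<in>V. c x \<in> S" by (auto simp: C_def)
    with col obtain p where "p \<in> D" "c (fst p) = c (snd p)" by blast
    then have "(\<Prod>p\<in>D. c (fst p) - c (snd p)) = 0" using D by (intro prod_zero) auto
    then show ?thesis by simp
  qed
  have "0 = (\<Sum>c\<in>C. \<Sum>B\<in>Pow D. sg B * (\<Prod>x\<in>V. c x ^ e B x / phi S (c x)))"
    using zero trm by simp
  also have "\<dots> = (\<Sum>B\<in>Pow D. sg B * (\<Sum>c\<in>C. \<Prod>x\<in>V. c x ^ e B x / phi S (c x)))"
    by (subst sum.swap) (simp add: sum_distrib_left)
  also have "\<dots> = (\<Sum>B\<in>Pow D. sg B * (\<Prod>x\<in>V. g (e B x)))"
  proof (rule sum.cong)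
    fix B
    show "sg B * (\<Sum>c\<in>C. \<Prod>x\<in>V. c x ^ e B x / phi S (c x)) = sg B * (\<Prod>x\<in>V. g (e B x))"
      unfolding g_def C_def using prod_sum_PiE[OF V, where B="\<lambda>_. S" and f="\<lambda>x s. s ^ e B x / phi S s"] S by simp
  qed simp
  also have "\<dots> = (\<Sum>B\<in>Pow D. sg B * (if eulerian_sub D (D - B) then 1 else 0))"
  proof (rule sum.cong)
    fix B assume B: "B \<in> Pow D"
    have od: "outdeg D x = outdeg B x + outdeg (D - B) x" for x
      using out_union[OF fB[OF B] fDB[of B], where x=x] B by (auto simp: Un_absorb1 Un_Diff_cancel)
    have sumE: "(\<Sum>x\<in>V. e B x) = (\<Sum>x\<in>V. N - 1)"
    proof -
      have "(\<Sum>x\<in>V. e B x) = (\<Sum>x\<in>V. a x) + (card B + card (D - B))"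
      proof -
        have "(\<Sum>x\<in>V. indeg (D - B) x) = card (D - B)" by (rule handshake_in[OF fDB V]) (use DV in auto)
        then show ?thesis unfolding e_def sum.distrib handshake_out[OF fB[OF B] V BV[OF B]] by simp
      qed
      also have "card B + card (D - B) = card D" using B D
        by (metis Diff_partition PowD card_Un_disjoint fDB fB Diff_disjoint)
      also have "card D = (\<Sum>x\<in>V. outdeg D x)" using handshake_out[OF D V DV] by simp
      also have "(\<Sum>x\<in>V. a x) + \<dots> = (\<Sum>x\<in>V. a x + outdeg D x)" by (simp add: sum.distrib)
      also have "\<dots> = (\<Sum>x\<in>V. N - 1)" using deg by (intro sum.cong) (auto simp: a_def)
      finally show ?thesis .
    qed
    have eq: "e B x = N - 1 \<longleftrightarrow> outdeg (D - B) x = indeg (D - B) x" if "x \<in> V" for x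
      using deg that od[of x] by (auto simp: e_def a_def)
    have outside: "outdeg (D - B) x = indeg (D - B) x" if "x \<notin> V" for x
    proof -
      have "{y. (x,y) \<in> D - B} = {}" "{y. (y,x) \<in> D - B} = {}" using DV that by auto
      then show ?thesis unfolding outdeg_def indeg_def by (simp only: card.empty)
    qed
    have eul: "eulerian_sub D (D - B) \<longleftrightarrow> (\<forall>x\<in>V. e B x = N - 1)"
      using eq outside unfolding eulerian_sub_def by blast
    show "sg B * (\<Prod>x\<in>V. g (e B x)) = sg B * (if eulerian_sub D (D - B) then 1 else 0)"
    proof (cases "\<forall>x\<in>V. e B x = N - 1")
      case True
      then have "(\<Prod>x\<in>V. g (e B x)) = 1" using lagr[OF S cS N] by (simp add: g_def)
      then show ?thesis using True eul by simp
    next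
      case False
      then obtain x where x: "x \<in> V" "e B x \<noteq> N - 1" by blast
      have "\<exists>y\<in>V. e B y < N - 1"
      proof (rule ccontr)
        assume "\<not> ?thesis"
        then have ge: "\<forall>y\<in>V. N - 1 \<le> e B y" by auto
        have "(\<Sum>y\<in>V. N - 1) < (\<Sum>y\<in>V. e B y)"
          using x ge by (intro sum_strict_mono_ex1[OF V]) (auto intro!: bexI[of _ x])
        then show False using sumE by simp
      qed
      then obtain y where y: "y \<in> V" "e B y < N - 1" by blast
      have "g (e B y) = 0" using lagr[OF S cS N, of "e B y"] y by (simp add: g_def)
      then have "(\<Prod>x\<in>V. g (e B x)) = 0" using y V by (intro prod_zero) auto
      then show ?thesis using False eul by auto
    qed
  qed simp
  also have "\<dots> = (\<Sum>F\<in>Pow D. (-1) ^ card F * (if eulerian_sub D F then 1 else 0))"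
    unfolding sg_def
    by (rule sum.reindex_bij_witness[of _ "\<lambda>F. D - F" "\<lambda>F. D - F"]) auto
  also have "\<dots> = (\<Sum>F\<in>{F. eulerian_sub D F}. (-1::real) ^ card F)"
  proof -
    have "{F. eulerian_sub D F} = {F \<in> Pow D. eulerian_sub D F}" by (auto simp: eulerian_sub_def)
    then show ?thesis using D by (simp add: sum.inter_filter[symmetric] if_distrib cong: if_cong)
  qed
  finally show ?thesis by simp
qed



definition D1 :: "nat \<Rightarrow> (nat \<times> nat) set" where
  "D1 m = {(i,j). (i < j \<and> j < m) \<or> (i = 2*m \<and> j < m) \<or> (i < m \<and> j = 2*m+1)}"
definition D2 :: "nat \<Rightarrow> (nat \<times> nat) set" where
  "D2 m = {(i,j). (m \<le> i \<and> i < j \<and> j < 2*m) \<or> (i = 2*m+1 \<and> m \<le> j \<and> j < 2*m) \<or> (m \<le> i \<and> i < 2*m \<and> j = 2*m)}"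
definition G1 :: "nat \<Rightarrow> (nat \<times> nat) set set" where
  "G1 m = {F. F \<subseteq> D1 m \<and> (\<forall>x<m. outdeg F x = indeg F x)}"
definition G2 :: "nat \<Rightarrow> (nat \<times> nat) set set" where
  "G2 m = {F. F \<subseteq> D2 m \<and> (\<forall>x. m \<le> x \<and> x < 2*m \<longrightarrow> outdeg F x = indeg F x)}"
definition sig :: "nat \<Rightarrow> nat \<Rightarrow> nat" where
  "sig m x = (if x < m then x + m else if x < 2*m then x - m else if x = 2*m then 2*m+1
     else if x = 2*m+1 then 2*m else x)"
definition sm :: "nat \<Rightarrow> (nat \<times> nat) set \<Rightarrow> (nat \<times> nat) set" where
  "sm m F = map_prod (sig m) (sig m) ` F"

lemma fin_D1: "finite (D1 m)"
  by (rule finite_subset[of _ "{..2*m+1} \<times> {..2*m+1}"]) (auto simp: D1_def)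
lemma fin_D2: "finite (D2 m)"
  by (rule finite_subset[of _ "{..2*m+1} \<times> {..2*m+1}"]) (auto simp: D2_def)

lemma sig_sig[simp]: "sig m (sig m x) = x"
  unfolding sig_def by (simp split: if_splits; linarith)
lemma inj_sig: "inj (sig m)"
  by (metis injI sig_sig)
lemma sm_sm[simp]: "sm m (sm m F) = F"
  by (force simp: sm_def image_image map_prod.comp comp_def)
lemma card_sm: "card (sm m F) = card F"
proof -
  have "inj (map_prod (sig m) (sig m))"
    by (rule injI) (metis map_prod_simp prod.collapse sig_sig prod.inject)
  then show ?thesis unfolding sm_def by (simp add: card_image inj_on_subset)
qed

lemma out_sm: "outdeg (sm m F) (sig m x) = outdeg F x"
proof -
  have "{y. (sig m x, y) \<in> sm m F} = sig m ` {y. (x,y) \<in> F}"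
    unfolding sm_def by (force simp: image_iff inj_eq[OF inj_sig])
  then show ?thesis unfolding outdeg_def by (simp add: card_image inj_on_subset[OF inj_sig])
qed
lemma in_sm: "indeg (sm m F) (sig m x) = indeg F x"
proof -
  have "{y. (y, sig m x) \<in> sm m F} = sig m ` {y. (y,x) \<in> F}"
    unfolding sm_def by (force simp: image_iff inj_eq[OF inj_sig])
  then show ?thesis unfolding indeg_def by (simp add: card_image inj_on_subset[OF inj_sig])
qed

lemma sm_D1: "F \<subseteq> D1 m \<Longrightarrow> sm m F \<subseteq> D2 m"
  unfolding sm_def D1_def D2_def sig_def by auto
lemma sm_D2: "F \<subseteq> D2 m \<Longrightarrow> sm m F \<subseteq> D1 m"
  unfolding sm_def D1_def D2_def sig_def by auto

lemma out_zero: "F \<subseteq> R \<Longrightarrow> (\<forall>y. (x,y) \<notin> R) \<Longrightarrow> outdeg F x = 0"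
  unfolding outdeg_def by (metis (no_types, lifting) card.empty empty_Collect_eq subsetD)
lemma in_zero: "F \<subseteq> R \<Longrightarrow> (\<forall>y. (y,x) \<notin> R) \<Longrightarrow> indeg F x = 0"
  unfolding indeg_def by (metis (no_types, lifting) card.empty empty_Collect_eq subsetD)

lemma hs_two:
  assumes F: "finite F" and V: "finite V" and FV: "F \<subseteq> V \<times> V" and ab: "a \<in> V" "b \<in> V" "a \<noteq> b"
    and bal: "\<forall>x\<in>V-{a,b}. outdeg F x = indeg F x"
  shows "outdeg F a + outdeg F b = indeg F a + indeg F b"
proof -
  have V': "V = insert a (insert b (V - {a,b}))" using ab by auto
  have "(\<Sum>x\<in>V. outdeg F x) = (\<Sum>x\<in>V. indeg F x)"
    using handshake_out[OF F V FV] handshake_in[OF F V FV] by simp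
  then have "outdeg F a + (outdeg F b + (\<Sum>x\<in>V-{a,b}. outdeg F x)) = indeg F a + (indeg F b + (\<Sum>x\<in>V-{a,b}. indeg F x))"
    using V ab by (subst (asm) (1 2) V') simp
  moreover have "(\<Sum>x\<in>V-{a,b}. outdeg F x) = (\<Sum>x\<in>V-{a,b}. indeg F x)"
    using bal by (intro sum.cong) auto
  ultimately show ?thesis by simp
qed

lemma G1_bal: assumes "F \<in> G1 m" shows "outdeg F (2*m) = indeg F (2*m+1)"
proof -
  have F: "F \<subseteq> D1 m" and b: "\<forall>x<m. outdeg F x = indeg F x" using assms by (auto simp: G1_def)
  have fF: "finite F" using F fin_D1 by (rule finite_subset)
  have bal: "\<forall>x\<in>{..2*m+1}-{2*m,2*m+1}. outdeg F x = indeg F x"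
  proof
    fix x assume x: "x \<in> {..2*m+1}-{2*m,2*m+1}"
    show "outdeg F x = indeg F x"
    proof (cases "x < m")
      case True then show ?thesis using b by auto
    next
      case False
      then have "outdeg F x = 0" "indeg F x = 0" using x
        by (auto intro!: out_zero[OF F] in_zero[OF F] simp: D1_def)
      then show ?thesis by simp
    qed
  qed
  have "outdeg F (2*m) + outdeg F (2*m+1) = indeg F (2*m) + indeg F (2*m+1)"
    by (rule hs_two[OF fF _ _ _ _ _ bal]) (use F in \<open>auto simp: D1_def\<close>)
  moreover have "outdeg F (2*m+1) = 0" "indeg F (2*m) = 0"
    by (auto intro!: out_zero[OF F] in_zero[OF F] simp: D1_def)
  ultimately show ?thesis by simp
qed

lemma G2_bal: assumes "F \<in> G2 m" shows "outdeg F (2*m+1) = indeg F (2*m)"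
proof -
  have F: "F \<subseteq> D2 m" and b: "\<forall>x. m \<le> x \<and> x < 2*m \<longrightarrow> outdeg F x = indeg F x" using assms by (auto simp: G2_def)
  have fF: "finite F" using F fin_D2 by (rule finite_subset)
  have bal: "\<forall>x\<in>{..2*m+1}-{2*m,2*m+1}. outdeg F x = indeg F x"
  proof
    fix x assume x: "x \<in> {..2*m+1}-{2*m,2*m+1}"
    show "outdeg F x = indeg F x"
    proof (cases "m \<le> x")
      case True then show ?thesis using b x by auto
    next
      case False
      then have "outdeg F x = 0" "indeg F x = 0" using x
        by (auto intro!: out_zero[OF F] in_zero[OF F] simp: D2_def)
      then show ?thesis by simp
    qed
  qed
  have "outdeg F (2*m) + outdeg F (2*m+1) = indeg F (2*m) + indeg F (2*m+1)"
    by (rule hs_two[OF fF _ _ _ _ _ bal]) (use F in \<open>auto simp: D2_def\<close>)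
  moreover have "outdeg F (2*m) = 0" "indeg F (2*m+1) = 0"
    by (auto intro!: out_zero[OF F] in_zero[OF F] simp: D2_def)
  ultimately show ?thesis by simp
qed



lemma D12_disj: "D1 m \<inter> D2 m = {}"
  unfolding D1_def D2_def by auto

lemma z1o: "F \<subseteq> D1 m \<Longrightarrow> \<not> x < m \<Longrightarrow> x \<noteq> 2*m \<Longrightarrow> outdeg F x = 0"
  by (rule out_zero) (auto simp: D1_def)
lemma z1i: "F \<subseteq> D1 m \<Longrightarrow> \<not> x < m \<Longrightarrow> x \<noteq> 2*m+1 \<Longrightarrow> indeg F x = 0"
  by (rule in_zero) (auto simp: D1_def)
lemma z2o: "F \<subseteq> D2 m \<Longrightarrow> \<not> (m \<le> x \<and> x < 2*m) \<Longrightarrow> x \<noteq> 2*m+1 \<Longrightarrow> outdeg F x = 0"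
  by (rule out_zero) (auto simp: D2_def)
lemma z2i: "F \<subseteq> D2 m \<Longrightarrow> \<not> (m \<le> x \<and> x < 2*m) \<Longrightarrow> x \<noteq> 2*m \<Longrightarrow> indeg F x = 0"
  by (rule in_zero) (auto simp: D2_def)

lemma eul_iff:
  assumes F: "F \<subseteq> D1 m \<union> D2 m"
  shows "eulerian_sub (D1 m \<union> D2 m) F \<longleftrightarrow>
    F \<inter> D1 m \<in> G1 m \<and> F \<inter> D2 m \<in> G2 m \<and> outdeg (F \<inter> D1 m) (2*m) = outdeg (F \<inter> D2 m) (2*m+1)"
proof -
  define F1 where "F1 = F \<inter> D1 m"
  define F2 where "F2 = F \<inter> D2 m"
  have s1: "F1 \<subseteq> D1 m" and s2: "F2 \<subseteq> D2 m" by (auto simp: F1_def F2_def)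
  have f1: "finite F1" using s1 fin_D1 by (rule finite_subset)
  have f2: "finite F2" using s2 fin_D2 by (rule finite_subset)
  have FU: "F = F1 \<union> F2" using F by (auto simp: F1_def F2_def)
  have dj: "F1 \<inter> F2 = {}" using D12_disj s1 s2 by blast
  have o: "outdeg F x = outdeg F1 x + outdeg F2 x" for x using out_union[OF f1 f2 dj] FU by simp
  have i: "indeg F x = indeg F1 x + indeg F2 x" for x using in_union[OF f1 f2 dj] FU by simp
  note z = z1o[OF s1] z1i[OF s1] z2o[OF s2] z2i[OF s2]
  show ?thesis unfolding F1_def[symmetric] F2_def[symmetric]
  proof
    assume e: "eulerian_sub (D1 m \<union> D2 m) F"
    then have b: "outdeg F x = indeg F x" for x by (auto simp: eulerian_sub_def)
    have g1: "F1 \<in> G1 m" unfolding G1_def using s1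
    proof (intro CollectI conjI allI impI)
      fix x assume "x < m" then show "outdeg F1 x = indeg F1 x" using b[of x] o[of x] i[of x] z[of x] by simp
    qed
    have g2: "F2 \<in> G2 m" unfolding G2_def using s2
    proof (intro CollectI conjI allI impI)
      fix x assume "m \<le> x \<and> x < 2*m" then show "outdeg F2 x = indeg F2 x" using b[of x] o[of x] i[of x] z[of x] by simp
    qed
    have "outdeg F1 (2*m) = indeg F2 (2*m)" using b[of "2*m"] o[of "2*m"] i[of "2*m"] z[of "2*m"] by simp
    then show "F1 \<in> G1 m \<and> F2 \<in> G2 m \<and> outdeg F1 (2*m) = outdeg F2 (2*m+1)"
      using g1 g2 G2_bal[OF g2] by simp
  next
    assume a: "F1 \<in> G1 m \<and> F2 \<in> G2 m \<and> outdeg F1 (2*m) = outdeg F2 (2*m+1)"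
    then have b1: "\<forall>x<m. outdeg F1 x = indeg F1 x" and b2: "\<forall>x. m \<le> x \<and> x < 2*m \<longrightarrow> outdeg F2 x = indeg F2 x"
      by (auto simp: G1_def G2_def)
    have c1: "outdeg F1 (2*m) = indeg F1 (2*m+1)" using G1_bal a by blast
    have c2: "outdeg F2 (2*m+1) = indeg F2 (2*m)" using G2_bal a by blast
    have "outdeg F x = indeg F x" for x
    proof -
      consider "x < m" | "m \<le> x \<and> x < 2*m" | "x = 2*m" | "x = 2*m+1" | "\<not> x < m" "\<not> (m \<le> x \<and> x < 2*m)" "x \<noteq> 2*m" "x \<noteq> 2*m+1"
        by linarith
      then show ?thesis
      proof cases
        case 1 then show ?thesis using b1 o[of x] i[of x] z[of x] by simp
      next
        case 2 then show ?thesis using b2 o[of x] i[of x] z[of x] by simp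
      next
        case 3 then show ?thesis using a c2 o[of x] i[of x] z[of x] by simp
      next
        case 4 then show ?thesis using a c1 o[of x] i[of x] z[of x] by simp
      next
        case 5 then show ?thesis using o[of x] i[of x] z[of x] by simp
      qed
    qed
    then show "eulerian_sub (D1 m \<union> D2 m) F" using F by (simp add: eulerian_sub_def)
  qed
qed

lemma G1_zero:
  assumes G: "F \<in> G1 m" and z: "outdeg F (2*m) = 0"
  shows "F = {}"
proof (rule ccontr)
  assume ne: "F \<noteq> {}"
  have s1: "F \<subseteq> D1 m" and b: "\<forall>x<m. outdeg F x = indeg F x" using G by (auto simp: G1_def)
  have f: "finite F" using s1 fin_D1 by (rule finite_subset)
  have zi: "indeg F (2*m+1) = 0" using G1_bal[OF G] z by simp
  have no1: "(2*m, y) \<notin> F" for y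
  proof
    assume "(2*m, y) \<in> F"
    then have "{y. (2*m,y) \<in> F} \<noteq> {}" by auto
    then show False using z fin_out[OF f, of "2*m"] by (simp add: outdeg_def)
  qed
  have no2: "(y, 2*m+1) \<notin> F" for y
  proof
    assume "(y, 2*m+1) \<in> F"
    then have "{y. (y,2*m+1) \<in> F} \<noteq> {}" by auto
    then show False using zi fin_in[OF f, of "2*m+1"] by (simp add: indeg_def)
  qed
  have arc: "i < j \<and> j < m" if "(i,j) \<in> F" for i j
    using that s1 no1[of j] no2[of i] by (auto simp: D1_def)
  define i0 where "i0 = Min (fst ` F)"
  have "i0 \<in> fst ` F" unfolding i0_def using f ne by (intro Min_in) auto
  then obtain j where ij: "(i0, j) \<in> F" by force
  have im: "i0 < m" using arc[OF ij] by simp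
  have "outdeg F i0 > 0" using ij fin_out[OF f, of i0] unfolding outdeg_def
    by (auto simp: card_gt_0_iff)
  moreover have "indeg F i0 = 0"
  proof -
    have "{h. (h, i0) \<in> F} = {}"
    proof (rule ccontr)
      assume "{h. (h, i0) \<in> F} \<noteq> {}"
      then obtain h where h: "(h, i0) \<in> F" by auto
      then have "h < i0" using arc by blast
      moreover have "i0 \<le> h" unfolding i0_def using f h by (intro Min_le) force+
      ultimately show False by simp
    qed
    then show ?thesis by (simp add: indeg_def)
  qed
  ultimately show False using b im by simp
qed



definition ssum :: "nat \<Rightarrow> nat \<Rightarrow> real" where
  "ssum m k = (\<Sum>F\<in>{F\<in>G1 m. outdeg F (2*m) = k}. (-1) ^ card F)"

lemma fin_G1: "finite (G1 m)"
  by (rule finite_subset[of _ "Pow (D1 m)"]) (use fin_D1 in \<open>auto simp: G1_def\<close>)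
lemma fin_G2: "finite (G2 m)"
  by (rule finite_subset[of _ "Pow (D2 m)"]) (use fin_D2 in \<open>auto simp: G2_def\<close>)

lemma sm_G1: assumes "F \<in> G1 m" shows "sm m F \<in> G2 m"
proof -
  have s: "F \<subseteq> D1 m" and b: "\<forall>x<m. outdeg F x = indeg F x" using assms by (auto simp: G1_def)
  have "outdeg (sm m F) x = indeg (sm m F) x" if "m \<le> x" "x < 2*m" for x
  proof -
    have x: "x = sig m (x - m)" using that by (simp add: sig_def)
    have "outdeg (sm m F) (sig m (x - m)) = indeg (sm m F) (sig m (x - m))"
      unfolding out_sm in_sm using b that by simp
    then show ?thesis using x by simp
  qed
  then show ?thesis using sm_D1[OF s] by (auto simp: G2_def)
qed

lemma sm_G2: assumes "F \<in> G2 m" shows "sm m F \<in> G1 m"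
proof -
  have s: "F \<subseteq> D2 m" and b: "\<forall>x. m \<le> x \<and> x < 2*m \<longrightarrow> outdeg F x = indeg F x" using assms by (auto simp: G2_def)
  have "outdeg (sm m F) x = indeg (sm m F) x" if "x < m" for x
  proof -
    have x: "x = sig m (x + m)" using that by (simp add: sig_def)
    have "outdeg (sm m F) (sig m (x + m)) = indeg (sm m F) (sig m (x + m))"
      unfolding out_sm in_sm using b that by simp
    then show ?thesis using x by simp
  qed
  then show ?thesis using sm_D2[OF s] by (auto simp: G1_def)
qed

lemma sig_2m: "sig m (2*m) = 2*m+1" "sig m (2*m+1) = 2*m" "sig m (Suc (2*m)) = 2*m" by (auto simp: sig_def)

lemma tsum: "(\<Sum>F\<in>{F\<in>G2 m. outdeg F (2*m+1) = k}. (-1::real) ^ card F) = ssum m k"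
  unfolding ssum_def
proof (rule sum.reindex_bij_witness[of _ "sm m" "sm m"])
  fix F assume "F \<in> {F \<in> G2 m. outdeg F (2*m+1) = k}"
  then show "sm m F \<in> {F \<in> G1 m. outdeg F (2*m) = k}"
    using sm_G2 out_sm[of m F "2*m+1"] by (simp add: sig_2m)
next
  fix F assume "F \<in> {F \<in> G1 m. outdeg F (2*m) = k}"
  then show "sm m F \<in> {F \<in> G2 m. outdeg F (2*m+1) = k}"
    using sm_G1 out_sm[of m F "2*m"] by (simp add: sig_2m)
qed (simp_all add: card_sm)

lemma ssum0: "ssum m 0 = 1"
proof -
  have "{F\<in>G1 m. outdeg F (2*m) = 0} = {{}}"
    using G1_zero by (auto simp: G1_def)
  then show ?thesis by (simp add: ssum_def)
qed

lemma main_sum: "(\<Sum>F\<in>{F. eulerian_sub (D1 m \<union> D2 m) F}. (-1::real) ^ card F) \<ge> 1"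
proof -
  define sg :: "(nat \<times> nat) set \<Rightarrow> real" where "sg F = (-1) ^ card F" for F
  define B where "B F1 = {F2\<in>G2 m. outdeg F2 (2*m+1) = outdeg F1 (2*m)}" for F1
  define P where "P = Sigma (G1 m) B"
  have "(\<Sum>F\<in>{F. eulerian_sub (D1 m \<union> D2 m) F}. sg F) = (\<Sum>(F1,F2)\<in>P. sg F1 * sg F2)"
  proof (rule sum.reindex_bij_witness[of _ "\<lambda>(F1,F2). F1 \<union> F2" "\<lambda>F. (F \<inter> D1 m, F \<inter> D2 m)"])
    fix F assume "F \<in> {F. eulerian_sub (D1 m \<union> D2 m) F}"
    then have e: "eulerian_sub (D1 m \<union> D2 m) F" and s: "F \<subseteq> D1 m \<union> D2 m" by (auto simp: eulerian_sub_def)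
    show "(case (F \<inter> D1 m, F \<inter> D2 m) of (F1, F2) \<Rightarrow> F1 \<union> F2) = F" using s by auto
    show "(F \<inter> D1 m, F \<inter> D2 m) \<in> P" using e eul_iff[OF s] by (auto simp: P_def B_def)
    have f1: "finite (F \<inter> D1 m)" "finite (F \<inter> D2 m)" using fin_D1 fin_D2 by auto
    have "card F = card (F \<inter> D1 m) + card (F \<inter> D2 m)"
    proof -
      have "F = (F \<inter> D1 m) \<union> (F \<inter> D2 m)" using s by auto
      moreover have "(F \<inter> D1 m) \<inter> (F \<inter> D2 m) = {}" using D12_disj by auto
      ultimately show ?thesis using f1 card_Un_disjoint by metis
    qed
    then show "(case (F \<inter> D1 m, F \<inter> D2 m) of (F1, F2) \<Rightarrow> sg F1 * sg F2) = sg F"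
      by (simp add: sg_def power_add)
  next
    fix p assume p: "p \<in> P"
    obtain F1 F2 where pe: "p = (F1, F2)" by force
    have g1: "F1 \<in> G1 m" and g2: "F2 \<in> G2 m" and k: "outdeg F2 (2*m+1) = outdeg F1 (2*m)"
      using p pe by (auto simp: P_def B_def)
    have s1: "F1 \<subseteq> D1 m" and s2: "F2 \<subseteq> D2 m" using g1 g2 by (auto simp: G1_def G2_def)
    have i1: "(F1 \<union> F2) \<inter> D1 m = F1" and i2: "(F1 \<union> F2) \<inter> D2 m = F2" using s1 s2 D12_disj by auto
    show "((case p of (F1, F2) \<Rightarrow> F1 \<union> F2) \<inter> D1 m, (case p of (F1, F2) \<Rightarrow> F1 \<union> F2) \<inter> D2 m) = p"
      using pe i1 i2 by simp
    have "eulerian_sub (D1 m \<union> D2 m) (F1 \<union> F2)"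
      using eul_iff[of "F1 \<union> F2" m] s1 s2 i1 i2 g1 g2 k by auto
    then show "(case p of (F1, F2) \<Rightarrow> F1 \<union> F2) \<in> {F. eulerian_sub (D1 m \<union> D2 m) F}" using pe by simp
  qed
  also have "\<dots> = (\<Sum>F1\<in>G1 m. \<Sum>F2\<in>B F1. sg F1 * sg F2)"
    unfolding P_def by (rule sum.Sigma[symmetric]) (use fin_G1 fin_G2 in \<open>auto simp: B_def\<close>)
  also have "\<dots> = (\<Sum>F1\<in>G1 m. sg F1 * ssum m (outdeg F1 (2*m)))"
    by (rule sum.cong) (simp_all add: B_def sum_distrib_left[symmetric] tsum[simplified] sg_def)
  also have "\<dots> = (\<Sum>k\<in>(\<lambda>F. outdeg F (2*m)) ` G1 m. \<Sum>F1\<in>{F\<in>G1 m. outdeg F (2*m) = k}. sg F1 * ssum m (outdeg F1 (2*m)))"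
    by (rule sum.group[symmetric]) (use fin_G1 in auto)
  also have "\<dots> = (\<Sum>k\<in>(\<lambda>F. outdeg F (2*m)) ` G1 m. ssum m k * ssum m k)"
    by (rule sum.cong) (simp_all add: ssum_def sg_def sum_distrib_right)
  also have "\<dots> \<ge> ssum m 0 * ssum m 0"
  proof (rule member_le_sum)
    show "0 \<in> (\<lambda>F. outdeg F (2*m)) ` G1 m"
      by (rule image_eqI[of _ _ "{}"]) (auto simp: G1_def)
  qed (use fin_G1 in auto)
  finally show ?thesis by (simp add: ssum0 sg_def)
qed



definition Qr :: "nat \<Rightarrow> nat \<Rightarrow> nat \<Rightarrow> bool" where
  "Qr m x y \<longleftrightarrow> ((x < m \<and> y < m) \<or>
         (m \<le> x \<and> x < 2*m \<and> m \<le> y \<and> y < 2*m) \<or>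
         (x < 2*m \<and> (y = 2*m \<or> y = 2*m+1)))"

lemma E_form: "Gn_edges (2*m+2) = {{x,y} | x y. x \<noteq> y \<and> Qr m x y}"
  by (simp add: Gn_edges_def Qr_def Let_def)

lemma E_mem: "x \<noteq> y \<Longrightarrow> Qr m x y \<Longrightarrow> {x,y} \<in> Gn_edges (2*m+2) \<and> {y,x} \<in> Gn_edges (2*m+2)"
  unfolding E_form by (auto simp: insert_commute)

lemma E_sub: "e \<in> Gn_edges (2*m+2) \<Longrightarrow> e \<subseteq> {0..<2*m+2}"
  unfolding E_form Qr_def by auto


lemma D0_arcs: "(x,y) \<in> D1 m \<union> D2 m \<Longrightarrow> x \<noteq> y \<and> {x,y} \<in> Gn_edges (2*m+2)"
proof -
  assume a: "(x,y) \<in> D1 m \<union> D2 m"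
  then have "x \<noteq> y" by (auto simp: D1_def D2_def)
  moreover have "Qr m x y \<or> Qr m y x" using a by (auto simp: D1_def D2_def Qr_def)
  ultimately show ?thesis using E_mem[of x y m] E_mem[of y x m] by auto
qed

lemma D0_antisym: "(x,y) \<in> D1 m \<union> D2 m \<Longrightarrow> (y,x) \<notin> D1 m \<union> D2 m"
  unfolding D1_def D2_def by simp presburger

lemma D0_cover: "x \<noteq> y \<Longrightarrow> Qr m x y \<Longrightarrow> (x,y) \<in> D1 m \<union> D2 m \<or> (y,x) \<in> D1 m \<union> D2 m"
  unfolding D1_def D2_def Qr_def by simp presburger

lemma D0_orient: "is_orientation (Gn_edges (2*m+2)) (D1 m \<union> D2 m)"
  unfolding is_orientation_def
proof (intro conjI ballI)
  fix p assume "p \<in> D1 m \<union> D2 m"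
  then show "case p of (x, y) \<Rightarrow> x \<noteq> y \<and> {x, y} \<in> Gn_edges (2 * m + 2)"
    using D0_arcs by (cases p) auto
next
  fix e assume "e \<in> Gn_edges (2*m+2)"
  then obtain x y where e: "e = {x,y}" "x \<noteq> y" "Qr m x y" unfolding E_form by blast
  have uq: "p = q" if "p \<in> D1 m \<union> D2 m" "e = {fst p, snd p}" "q \<in> D1 m \<union> D2 m" "e = {fst q, snd q}" for p q
  proof -
    have "p = (x,y) \<or> p = (y,x)" "q = (x,y) \<or> q = (y,x)" using that(2,4) e(1)
      by (auto simp: doubleton_eq_iff prod_eq_iff)
    then show ?thesis using that(1,3) D0_antisym by blast
  qed
  show "\<exists>!p. p \<in> D1 m \<union> D2 m \<and> e = {fst p, snd p}"
  proof (cases "(x,y) \<in> D1 m \<union> D2 m")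
    case True
    then have "(x,y) \<in> D1 m \<union> D2 m" .
    have w: "(x,y) \<in> D1 m \<union> D2 m \<and> e = {fst (x,y), snd (x,y)}" using e(1) \<open>(x,y) \<in> D1 m \<union> D2 m\<close> by (auto simp: insert_commute)
    show ?thesis
    proof (rule ex1I[of _ "(x,y)"])
      fix q assume "q \<in> D1 m \<union> D2 m \<and> e = {fst q, snd q}"
      then show "q = (x,y)" using uq[of q "(x,y)"] w by blast
    qed (rule w)
  next
    case False
    then have "(y,x) \<in> D1 m \<union> D2 m" using D0_cover e by blast
    have w: "(y,x) \<in> D1 m \<union> D2 m \<and> e = {fst (y,x), snd (y,x)}" using e(1) \<open>(y,x) \<in> D1 m \<union> D2 m\<close> by (auto simp: insert_commute)
    show ?thesis
    proof (rule ex1I[of _ "(y,x)"])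
      fix q assume "q \<in> D1 m \<union> D2 m \<and> e = {fst q, snd q}"
      then show "q = (y,x)" using uq[of q "(y,x)"] w by blast
    qed (rule w)
  qed
qed

lemma D0_outdeg: "outdeg (D1 m \<union> D2 m) x \<le> m"
proof -
  let ?O = "{y. (x,y) \<in> D1 m \<union> D2 m}"
  consider "x < m" | "m \<le> x \<and> x < 2*m" | "x = 2*m" | "x = 2*m+1" | "x > 2*m+1" by linarith
  then have "card ?O \<le> m"
  proof cases
    case 1
    then have "?O \<subseteq> {x<..<m} \<union> {2*m+1}" unfolding D1_def D2_def by auto
    then have "card ?O \<le> card ({x<..<m} \<union> {2*m+1})" by (intro card_mono) auto
    also have "\<dots> \<le> card {x<..<m} + 1" using card_Un_le[of "{x<..<m}" "{2*m+1}"] by simp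
    finally show ?thesis using 1 by simp
  next
    case 2
    then have "?O \<subseteq> {x<..<2*m} \<union> {2*m}" unfolding D1_def D2_def by auto
    then have "card ?O \<le> card ({x<..<2*m} \<union> {2*m})" by (intro card_mono) auto
    also have "\<dots> \<le> card {x<..<2*m} + 1" using card_Un_le[of "{x<..<2*m}" "{2*m}"] by simp
    finally have "card ?O \<le> 2 * m - Suc x + 1" by simp
    then show ?thesis using 2 by linarith
  next
    case 3
    then have "?O \<subseteq> {..<m}" unfolding D1_def D2_def by auto
    then show ?thesis using card_mono[of "{..<m}" ?O] by simp
  next
    case 4
    then have "?O \<subseteq> {m..<2*m}" unfolding D1_def D2_def by auto
    then show ?thesis using card_mono[of "{m..<2*m}" ?O] by simp
  next
    case 5
    then have "?O = {}" unfolding D1_def D2_def by auto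
    then show ?thesis by simp
  qed
  then show ?thesis by (simp add: outdeg_def)
qed

lemma D0_EE: "EE (D1 m \<union> D2 m) \<noteq> EO (D1 m \<union> D2 m)"
proof -
  have "finite (D1 m \<union> D2 m)" using fin_D1 fin_D2 by simp
  from EE_EO[OF this] main_sum[of m] show ?thesis by auto
qed

lemma lower:
  assumes m: "m \<ge> 1" and o: "is_orientation (Gn_edges (2*m+2)) D"
    and deg: "\<forall>x\<in>{0..<2*m+2}. outdeg D x < k" and k: "k \<le> m"
  shows "EE D = EO D"
proof -
  define V where "V = {0..<2*m+2}"
  define S where "S = (real ` {..<m})"
  have DV: "D \<subseteq> V \<times> V"
  proof
    fix p assume p: "p \<in> D"
    have o1: "\<forall>(x,y)\<in>D. x \<noteq> y \<and> {x,y} \<in> Gn_edges (2*m+2)"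
      using o unfolding is_orientation_def by (rule conjunct1)
    obtain a b where ab: "p = (a,b)" by force
    have "{a,b} \<in> Gn_edges (2*m+2)" using o1 p ab by blast
    then have "{fst p, snd p} \<in> Gn_edges (2*m+2)" using ab by simp
    then have "{fst p, snd p} \<subseteq> V" using E_sub unfolding V_def by blast
    then show "p \<in> V \<times> V" by (cases p) auto
  qed
  have D: "finite D" using DV by (rule finite_subset) (simp add: V_def)
  have cS: "card S = m" unfolding S_def by (simp add: card_image)
  have col: "\<forall>c. (\<forall>x\<in>V. c x \<in> S) \<longrightarrow> (\<exists>p\<in>D. c (fst p) = c (snd p))"
  proof (intro allI impI)
    fix c :: "nat \<Rightarrow> real" assume c: "\<forall>x\<in>V. c x \<in> S"
    define K where "K = insert (2*m) {..<m}"
    have cK: "card K = m + 1" by (simp add: K_def)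
    have "\<not> inj_on c K"
    proof
      assume "inj_on c K"
      then have "card (c ` K) = m + 1" using cK by (simp add: card_image)
      moreover have "c ` K \<subseteq> S" using c by (auto simp: K_def V_def)
      then have "card (c ` K) \<le> m" using cS card_mono[of S] by (simp add: S_def)
      ultimately show False by simp
    qed
    then obtain x y where xy: "x \<in> K" "y \<in> K" "x \<noteq> y" "c x = c y" unfolding inj_on_def by metis
    have "Qr m x y \<or> Qr m y x" using xy m by (auto simp: K_def Qr_def)
    then have "{x,y} \<in> Gn_edges (2*m+2)" using E_mem[of x y m] E_mem[of y x m] xy by auto
    moreover have o2: "\<forall>e\<in>Gn_edges (2*m+2). \<exists>!p. p \<in> D \<and> e = {fst p, snd p}"
      using o unfolding is_orientation_def by (rule conjunct2)
    ultimately have "\<exists>!p. p \<in> D \<and> {x,y} = {fst p, snd p}" by (rule bspec[rotated])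
    then obtain p where p: "p \<in> D" "{x,y} = {fst p, snd p}" by (metis ex1_implies_ex)
    then have "c (fst p) = c (snd p)" using xy(4) by (metis doubleton_eq_iff)
    then show "\<exists>p\<in>D. c (fst p) = c (snd p)" using p by blast
  qed
  have "(\<Sum>F\<in>{F. eulerian_sub D F}. (-1::real) ^ card F) = 0"
    by (rule cn[OF _ DV _ cS m _ col]) (use deg k in \<open>auto simp: V_def S_def\<close>)
  with EE_EO[OF D] show ?thesis by simp
qed

theorem theorem2:
  fixes n :: nat
  assumes "even n" and "n \<ge> 4"
  shows "AT (Gn_vertices n) (Gn_edges n) = n div 2"
proof -
  define m where "m = (n - 2) div 2"
  have n: "n = 2*m+2" and m: "m \<ge> 1" using assms by (auto simp: m_def elim!: evenE)
  show ?thesis unfolding AT_def Gn_vertices_def n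
  proof (rule Least_equality)
    show "\<exists>D. is_orientation (Gn_edges (2*m+2)) D \<and> (\<forall>x\<in>{0..<2*m+2}. outdeg D x < (2*m+2) div 2) \<and> EE D \<noteq> EO D"
      using D0_orient D0_EE D0_outdeg by (intro exI[of _ "D1 m \<union> D2 m"]) (auto simp: le_imp_less_Suc)
  next
    fix k assume "\<exists>D. is_orientation (Gn_edges (2*m+2)) D \<and> (\<forall>x\<in>{0..<2*m+2}. outdeg D x < k) \<and> EE D \<noteq> EO D"
    then obtain D where D: "is_orientation (Gn_edges (2*m+2)) D" "\<forall>x\<in>{0..<2*m+2}. outdeg D x < k" "EE D \<noteq> EO D" by blast
    show "(2*m+2) div 2 \<le> k"
    proof (rule ccontr)
      assume "\<not> ?thesis"
      then have "k \<le> m" by simp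
      then show False using lower[OF m D(1) D(2)] D(3) by simp
    qed
  qed
qed
end
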